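(* Let $s\ge1$. If $c_1(z),\dots,c_g(z)\in\mathbb Z[z]$ satisfy $\sum_{l=1}^gc_l(z)\,I^{[lp^s-1]}_{p^s}(z)\in p\,\mathbb Z[z]^n$, then $c_l(z)\in p\,\mathbb Z[z]$ for all $l=1,\dots,g$. In other words, the reductions modulo $p$ of $I^{[lp^s-1]}_{p^s}(z)$, $l=1,\dots,g$, are linearly independent over $\mathbb F_p[z]$.
   Context: Let $p$ be an odd prime, $g\ge1$, $n=2g+1$, with $p>n$; $z=(z_1,\dots,z_n)$. For a positive integer $r$ put $M_r=(p^r-1)/2$, $\Phi_{p^r}(x,z)=\prod_{i=1}^n(x-z_i)^{M_r}$, expand $\Big(\frac{\Phi_{p^r}}{x-z_1},\dots,\frac{\Phi_{p^r}}{x-z_n}\Big)=\sum_iP^i_{p^r}(z)x^i$ with $P^i_{p^r}(z)\in\mathbb Z[z]^n$, and set $I^{[lp^r-1]}_{p^r}(z)=P^{lp^r-1}_{p^r}(z)$. *)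

theory Defs
  imports "HOL-Library.Poly_Mapping" "HOL-Computational_Algebra.Polynomial"
begin

text \<open>Multivariate integer polynomials in variables z_1, z_2, ... :
  finitely supported maps from monomials (exponent vectors) to coefficients;
  the ring structure is the convolution product of Poly_Mapping.\<close>
type_synonym zpoly = "(nat \<Rightarrow>\<^sub>0 nat) \<Rightarrow>\<^sub>0 int"

definition zvar :: "nat \<Rightarrow> zpoly" where
  "zvar i = Poly_Mapping.single (Poly_Mapping.single i 1) 1"

definition in_pZ :: "nat \<Rightarrow> zpoly \<Rightarrow> bool" where
  "in_pZ p f \<longleftrightarrow> (\<forall>m. int p dvd Poly_Mapping.lookup f m)"

definition in_Zz :: "nat \<Rightarrow> zpoly \<Rightarrow> bool" where
  "in_Zz n f \<longleftrightarrow> (\<forall>m\<in>Poly_Mapping.keys f. Poly_Mapping.keys m \<subseteq> {1..n})"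

definition M :: "nat \<Rightarrow> nat \<Rightarrow> nat" where
  "M p r = (p ^ r - 1) div 2"

text \<open>Phi_{p^r}(x,z) / (x - z_j), as a polynomial in x over Z[z], for z = (z_1..z_n).\<close>
definition Phi_quot :: "nat \<Rightarrow> nat \<Rightarrow> nat \<Rightarrow> nat \<Rightarrow> zpoly poly" where
  "Phi_quot n p r j =
     [:- zvar j, 1:] ^ (M p r - 1) * (\<Prod>i\<in>{1..n} - {j}. [:- zvar i, 1:] ^ M p r)"

text \<open>j-th component of P^i_{p^r}(z): coefficient of x^i.\<close>
definition Pcomp :: "nat \<Rightarrow> nat \<Rightarrow> nat \<Rightarrow> nat \<Rightarrow> nat \<Rightarrow> zpoly" where
  "Pcomp n p r i j = coeff (Phi_quot n p r j) i"

text \<open>j-th component of I^{[l p^r - 1]}_{p^r}(z).\<close>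
definition Icomp :: "nat \<Rightarrow> nat \<Rightarrow> nat \<Rightarrow> nat \<Rightarrow> nat \<Rightarrow> zpoly" where
  "Icomp n p r l j = Pcomp n p r (l * p ^ r - 1) j"

end

theory Submission
  imports Defs
begin


abbreviation lookup where "lookup \<equiv> Poly_Mapping.lookup"
abbreviation keys where "keys \<equiv> Poly_Mapping.keys"
abbreviation single where "single \<equiv> Poly_Mapping.single"

lemma less_pm_iff: "(a::nat\<Rightarrow>\<^sub>0nat) < b \<longleftrightarrow> less_fun (lookup a) (lookup b)"
  by transfer simp

lemma lookup_mult_fin:
  fixes f g :: zpoly
  shows "lookup (f * g) t = (\<Sum>l\<in>keys f. lookup f l * (\<Sum>q\<in>keys g. lookup g q when t = l + q))"
proof -
  have inner: "(\<Sum>q. lookup g q when t = l + q) = (\<Sum>q\<in>keys g. lookup g q when t = l + q)" for l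
    by (rule Sum_any.expand_superset) (auto simp: in_keys_iff when_def)
  show ?thesis unfolding lookup_mult inner
    by (rule Sum_any.expand_superset) (auto simp: in_keys_iff)
qed

lemma mult_bound:
  fixes f g :: zpoly and p :: int
  assumes "\<And>a. \<not> p dvd lookup f a \<Longrightarrow> a \<le> A"
    and "\<And>b. \<not> p dvd lookup g b \<Longrightarrow> b \<le> B"
    and "\<not> t \<le> A + B"
  shows "p dvd lookup (f * g) t"
  unfolding lookup_mult_fin
proof (rule dvd_sum)
  fix l assume "l \<in> keys f"
  show "p dvd lookup f l * (\<Sum>q\<in>keys g. lookup g q when t = l + q)"
  proof (cases "p dvd lookup f l")
    case True then show ?thesis by simp
  next
    case False
    hence lA: "l \<le> A" using assms(1) by blast
    have "p dvd (\<Sum>q\<in>keys g. lookup g q when t = l + q)"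
    proof (rule dvd_sum)
      fix q assume "q \<in> keys g"
      show "p dvd (lookup g q when t = l + q)"
      proof (cases "t = l + q")
        case True
        have "\<not> q \<le> B" using lA True assms(3) add_mono by blast
        then show ?thesis using assms(2) True by fastforce
      qed simp
    qed
    then show ?thesis by simp
  qed
qed

lemma mult_zero_mod:
  fixes f g :: zpoly and p :: int
  assumes "\<And>a. p dvd lookup f a"
  shows "p dvd lookup (f * g) t"
  unfolding lookup_mult_fin by (rule dvd_sum) (simp add: assms)

lemma mult_top:
  fixes f g :: zpoly and p :: int
  assumes "\<And>a. \<not> p dvd lookup f a \<Longrightarrow> a \<le> A"
    and "\<And>b. \<not> p dvd lookup g b \<Longrightarrow> b \<le> B"
  shows "p dvd lookup (f * g) (A + B) - lookup f A * lookup g B"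
proof -
  let ?T = "\<lambda>l. lookup f l * (\<Sum>q\<in>keys g. lookup g q when A + B = l + q)"
  let ?U = "\<lambda>l. if l = A then lookup f A * lookup g B else 0"
  have sU: "(\<Sum>l\<in>keys f. ?U l) = lookup f A * lookup g B"
    by (cases "A \<in> keys f") (auto simp: in_keys_iff sum.delta)
  have "p dvd (\<Sum>l\<in>keys f. ?T l - ?U l)"
  proof (rule dvd_sum)
    fix l assume "l \<in> keys f"
    show "p dvd ?T l - ?U l"
    proof (cases "l = A")
      case True
      have "(\<Sum>q\<in>keys g. lookup g q when A + B = A + q) = (\<Sum>q\<in>keys g. lookup g q when q = B)"
        by (rule sum.cong) (auto simp: when_def)
      also have "\<dots> = lookup g B"
        by (cases "B \<in> keys g") (auto simp: in_keys_iff when_def)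
      finally show ?thesis using True by simp
    next
      case False
      show ?thesis
      proof (cases "p dvd lookup f l")
        case True then show ?thesis using False by simp
      next
        case nd: False
        hence "l < A" using assms(1) False by fastforce
        have "p dvd (\<Sum>q\<in>keys g. lookup g q when A + B = l + q)"
        proof (rule dvd_sum)
          fix q assume "q \<in> keys g"
          show "p dvd (lookup g q when A + B = l + q)"
          proof (cases "A + B = l + q")
            case True
            have "\<not> q \<le> B"
            proof
              assume "q \<le> B" hence "l + q < A + B" using \<open>l < A\<close> add_less_le_mono by blast
              thus False using True by simp
            qed
            then show ?thesis using assms(2) True by fastforce
          qed simp
        qed
        then show ?thesis using False by simp
      qed
    qed
  qed
  then show ?thesis unfolding lookup_mult_fin sum_subtractf sU .
qed



lemma single_single_mult_lookup:
  fixes f :: zpoly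
  shows "lookup (single (single a r) c * f) b = (if r \<le> lookup b a then c * lookup f (b - single a r) else 0)"
proof -
  have eq: "(b = single a r + q) \<longleftrightarrow> (r \<le> lookup b a \<and> q = b - single a r)" for q :: "nat \<Rightarrow>\<^sub>0 nat"
  proof
    assume h: "b = single a r + q"
    have "lookup b a = r + lookup q a" using h by (simp add: lookup_add)
    moreover have "q = b - single a r" using h by simp
    ultimately show "r \<le> lookup b a \<and> q = b - single a r" by simp
  next
    assume h: "r \<le> lookup b a \<and> q = b - single a r"
    have "b = single a r + (b - single a r)"
    proof (rule poly_mapping_eqI)
      fix i show "lookup b i = lookup (single a r + (b - single a r)) i"
        using h by (cases "i = a") (simp_all add: lookup_add lookup_minus lookup_single_not_eq)
    qed
    then show "b = single a r + q" using h by simp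
  qed
  have "lookup (single (single a r) c * f) b = (\<Sum>l. lookup (single (single a r) c) l * (\<Sum>q. lookup f q when b = l + q))"
    by (rule lookup_mult)
  also have "\<dots> = c * (\<Sum>q. lookup f q when b = single a r + q)"
  proof -
    have "(\<Sum>l. lookup (single (single a r) c) l * (\<Sum>q. lookup f q when b = l + q))
       = (\<Sum>l. (c * (\<Sum>q. lookup f q when b = l + q)) when l = single a r)"
      by (rule Sum_any.cong) (auto simp: lookup_single when_def)
    then show ?thesis by simp
  qed
  also have "(\<Sum>q. lookup f q when b = single a r + q) = (\<Sum>q. (lookup f q when r \<le> lookup b a) when q = b - single a r)"
    by (rule Sum_any.cong) (auto simp: eq when_def)
  also have "\<dots> = (lookup f (b - single a r) when r \<le> lookup b a)" by simp
  finally show ?thesis by (simp add: when_def)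
qed

lemma zvar_pow: "zvar a ^ k = single (single a k) (1::int)"
proof (induction k)
  case 0 then show ?case by simp
next
  case (Suc k)
  have "zvar a ^ Suc k = zvar a * zvar a ^ k" by simp
  also have "\<dots> = single (single a 1) 1 * single (single a k) (1::int)"
    by (simp only: Suc, simp add: zvar_def)
  also have "\<dots> = single (single a (Suc k)) (1::int)"
    by (simp add: mult_single single_add[symmetric])
  finally show ?case .
qed

lemma neg_zvar_pow: "(- zvar a) ^ k = single (single a k) ((-1::int) ^ k)"
proof -
  have "(- zvar a) ^ k = (-1) ^ k * zvar a ^ k" by (rule power_minus)
  also have "(-1::zpoly) ^ k = single 0 ((-1::int) ^ k)"
  proof -
    have m1: "(-1::zpoly) = single 0 (-1::int)" by (simp only: single_uminus single_one)
    have "single 0 (v::int) ^ k = single 0 (v ^ k)" for v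
      by (induction k) (simp_all only: power_0 power_Suc single_one mult_single add_0)
    then show ?thesis by (simp only: m1)
  qed
  finally show ?thesis by (simp only: zvar_pow mult_single add_0 mult_1_right)
qed

lemma of_nat_mult_single: "(of_nat c :: zpoly) * single m v = single m (of_nat c * v)"
proof -
  have "(of_nat c :: zpoly) = single 0 (of_nat c)" by simp
  then have "(of_nat c :: zpoly) * single m v = single 0 (of_nat c) * single m v" by simp
  also have "\<dots> = single m (of_nat c * v)" by (simp only: mult_single add_0)
  finally show ?thesis .
qed

lemma coeff_lin_pow: "coeff ([:a, 1:] ^ e) t = of_nat (e choose t) * (a::'a::comm_ring_1) ^ (e - t)"
proof (cases "t \<le> e")
  case True then show ?thesis using coeff_linear_poly_power[OF True, of a 1] by simp
next
  case False
  have "degree ([:a, 1:] ^ e) \<le> e"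
    by (metis degree_linear_power order.refl)
  then show ?thesis using False by (simp add: coeff_eq_0 binomial_eq_0)
qed

definition CF :: "nat set \<Rightarrow> (nat \<Rightarrow> nat) \<Rightarrow> nat \<Rightarrow> (nat \<Rightarrow>\<^sub>0 nat) \<Rightarrow> int" where
  "CF I e N b = (if (\<forall>i. i \<notin> I \<longrightarrow> lookup b i = 0) \<and> (\<forall>i\<in>I. lookup b i \<le> e i) \<and> N + (\<Sum>i\<in>I. lookup b i) = (\<Sum>i\<in>I. e i)
     then \<Prod>i\<in>I. (-1) ^ (lookup b i) * int (e i choose lookup b i) else 0)"

lemma coeff_prod_formula:
  assumes "finite I"
  shows "lookup (coeff (\<Prod>i\<in>I. [:- zvar i, 1:] ^ e i) N) b = CF I e N b"
  using assms
proof (induction I arbitrary: N b rule: finite_induct)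
  case empty
  show ?case
    by (auto simp: CF_def lookup_one when_def poly_mapping_eq_iff fun_eq_iff)
next
  case (insert a I)
  let ?P = "\<Prod>i\<in>I. [:- zvar i, 1:] ^ e i"
  let ?\<beta> = "lookup b a"
  define T where "T t = int (e a choose t) * (-1) ^ (e a - t) *
      (if e a - t \<le> ?\<beta> then CF I e (N - t) (b - single a (e a - t)) else 0)" for t
  have "coeff (\<Prod>i\<in>insert a I. [:- zvar i, 1:] ^ e i) N = coeff ([:- zvar a, 1:] ^ e a * ?P) N"
    using insert by simp
  also have "\<dots> = (\<Sum>t\<le>N. coeff ([:- zvar a, 1:] ^ e a) t * coeff ?P (N - t))"
    by (rule coeff_mult)
  finally have "lookup (coeff (\<Prod>i\<in>insert a I. [:- zvar i, 1:] ^ e i) N) b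
      = (\<Sum>t\<le>N. lookup (coeff ([:- zvar a, 1:] ^ e a) t * coeff ?P (N - t)) b)"
    by (simp add: lookup_sum)
  also have "\<dots> = (\<Sum>t\<le>N. T t)"
  proof (rule sum.cong)
    fix t assume "t \<in> {..N}"
    have "coeff ([:- zvar a, 1:] ^ e a) t = single (single a (e a - t)) (int (e a choose t) * (-1) ^ (e a - t))"
      by (simp add: coeff_lin_pow neg_zvar_pow of_nat_mult_single)
    then show "lookup (coeff ([:- zvar a, 1:] ^ e a) t * coeff ?P (N - t)) b = T t"
      by (simp add: single_single_mult_lookup T_def insert.IH)
  qed simp
  also have "\<dots> = (\<Sum>t\<le>N. if t = e a - ?\<beta> then T t else 0)"
  proof (rule sum.cong)
    fix t assume "t \<in> {..N}"
    show "T t = (if t = e a - ?\<beta> then T t else 0)"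
    proof (cases "t = e a - ?\<beta>")
      case False
      show ?thesis
      proof (cases "t \<le> e a \<and> e a - t \<le> ?\<beta>")
        case True
        then have "lookup (b - single a (e a - t)) a \<noteq> 0" using False
          by (auto simp: lookup_minus)
        then show ?thesis using True insert(2) False by (auto simp: T_def CF_def)
      next
        case False
        then show ?thesis by (auto simp: T_def)
      qed
    qed simp
  qed simp
  also have "\<dots> = (if e a - ?\<beta> \<le> N then T (e a - ?\<beta>) else 0)"
    by (simp add: sum.delta)
  also have "\<dots> = CF (insert a I) e N b"
  proof (cases "?\<beta> \<le> e a")
    case False
    then have "lookup (b - single a (e a)) a \<noteq> 0" by (simp add: lookup_minus)
    then have "T (e a - ?\<beta>) = 0" using False insert(2) by (auto simp: T_def CF_def)
    moreover have "CF (insert a I) e N b = 0" using False by (auto simp: CF_def)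
    ultimately show ?thesis by simp
  next
    case True
    let ?b' = "b - single a ?\<beta>"
    have lb': "lookup ?b' i = (if i = a then 0 else lookup b i)" for i
      by (simp add: lookup_minus lookup_single when_def)
    have sb: "(\<Sum>i\<in>I. lookup ?b' i) = (\<Sum>i\<in>I. lookup b i)"
      using insert(2) by (intro sum.cong) (auto simp: lb')
    have pb: "(\<Prod>i\<in>I. (-1) ^ (lookup ?b' i) * int (e i choose lookup ?b' i))
        = (\<Prod>i\<in>I. (-1) ^ (lookup b i) * int (e i choose lookup b i))"
      using insert(2) by (intro prod.cong) (auto simp: lb')
    have c1: "(\<forall>i. i \<notin> I \<longrightarrow> lookup ?b' i = 0) \<longleftrightarrow> (\<forall>i. i \<notin> insert a I \<longrightarrow> lookup b i = 0)"
      by (auto simp: lb')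
    have c3: "(\<forall>i\<in>I. lookup ?b' i \<le> e i) \<longleftrightarrow> (\<forall>i\<in>I. lookup b i \<le> e i)"
      using insert(2) by (auto simp: lb')
    have c2: "(\<forall>i\<in>I. lookup b i \<le> e i) \<Longrightarrow> (e a - ?\<beta> \<le> N \<and> N - (e a - ?\<beta>) + (\<Sum>i\<in>I. lookup b i) = (\<Sum>i\<in>I. e i))
        \<longleftrightarrow> N + (\<Sum>i\<in>insert a I. lookup b i) = (\<Sum>i\<in>insert a I. e i)"
    proof -
      assume "\<forall>i\<in>I. lookup b i \<le> e i"
      then have "(\<Sum>i\<in>I. lookup b i) \<le> (\<Sum>i\<in>I. e i)" by (intro sum_mono) auto
      then show ?thesis using True insert(1,2) by auto
    qed
    have ch: "e a choose (e a - ?\<beta>) = e a choose ?\<beta>"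
      using True binomial_symmetric by metis
    have eT: "T (e a - ?\<beta>) = int (e a choose ?\<beta>) * (-1) ^ ?\<beta> * CF I e (N - (e a - ?\<beta>)) ?b'"
      using True by (simp add: T_def ch)
    show ?thesis
    proof (cases "(\<forall>i. i \<notin> insert a I \<longrightarrow> lookup b i = 0) \<and> (\<forall>i\<in>I. lookup b i \<le> e i) \<and>
        N + (\<Sum>i\<in>insert a I. lookup b i) = (\<Sum>i\<in>insert a I. e i)")
      case yes: True
      then have le: "e a - ?\<beta> \<le> N" using c2 by blast
      have cnd: "(\<forall>i. i \<notin> I \<longrightarrow> lookup ?b' i = 0) \<and> (\<forall>i\<in>I. lookup ?b' i \<le> e i) \<and>
          N - (e a - ?\<beta>) + (\<Sum>i\<in>I. lookup ?b' i) = (\<Sum>i\<in>I. e i)"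
        unfolding sb using yes c1 c3 c2 by blast
      have A: "CF I e (N - (e a - ?\<beta>)) ?b' = (\<Prod>i\<in>I. (-1) ^ (lookup b i) * int (e i choose lookup b i))"
        by (subst CF_def, subst if_P[OF cnd], rule pb)
      have cnd2: "(\<forall>i. i \<notin> insert a I \<longrightarrow> lookup b i = 0) \<and> (\<forall>i\<in>insert a I. lookup b i \<le> e i) \<and>
          N + (\<Sum>i\<in>insert a I. lookup b i) = (\<Sum>i\<in>insert a I. e i)"
        using yes True by blast
      have B: "CF (insert a I) e N b = ((-1) ^ ?\<beta> * int (e a choose ?\<beta>)) * (\<Prod>i\<in>I. (-1) ^ (lookup b i) * int (e i choose lookup b i))"
        by (subst CF_def, subst if_P[OF cnd2], rule prod.insert[OF insert(1,2)])
      show ?thesis using le eT A B by simp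
    next
      case no: False
      have ncnd2: "\<not> ((\<forall>i. i \<notin> insert a I \<longrightarrow> lookup b i = 0) \<and> (\<forall>i\<in>insert a I. lookup b i \<le> e i) \<and>
          N + (\<Sum>i\<in>insert a I. lookup b i) = (\<Sum>i\<in>insert a I. e i))"
        using no by blast
      have B: "CF (insert a I) e N b = 0"
        by (subst CF_def, subst if_not_P[OF ncnd2], rule refl)
      have A: "CF I e (N - (e a - ?\<beta>)) ?b' = 0" if le: "e a - ?\<beta> \<le> N"
      proof -
        have ncnd: "\<not> ((\<forall>i. i \<notin> I \<longrightarrow> lookup ?b' i = 0) \<and> (\<forall>i\<in>I. lookup ?b' i \<le> e i) \<and>
          N - (e a - ?\<beta>) + (\<Sum>i\<in>I. lookup ?b' i) = (\<Sum>i\<in>I. e i))"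
          unfolding sb using no c1 c3 c2 le by blast
        show ?thesis by (subst CF_def, subst if_not_P[OF ncnd], rule refl)
      qed
      show ?thesis using eT A B by simp
    qed
  qed
  finally show ?case .
qed


lemma choose_step: "(n choose Suc k) * Suc k = (n choose k) * (n - k)"
  by (metis binomial_absorb_comp binomial_absorption mult.commute)

lemma binom_ndvd:
  fixes p M t s :: nat
  assumes p: "prime p" and M: "2*M + 1 = p^s" and s: "s \<ge> 1" and t: "2*t + 1 < p"
  shows "\<not> p dvd ((M - 1) choose t)"
  using t
proof (induction t)
  case 0
  then show ?case using p by (simp add: prime_gt_1_nat)
next
  case (Suc t)
  have IH: "\<not> p dvd ((M - 1) choose t)" using Suc by simp
  have "p \<le> p ^ s" using power_increasing[of 1 s p] s prime_gt_0_nat[OF p] by simp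
  hence "2*M + 1 > 2*t + 3" using M Suc.prems by simp
  hence Mt: "M \<ge> t + 2" by linarith
  show ?case
  proof
    assume "p dvd ((M - 1) choose Suc t)"
    hence "p dvd ((M - 1) choose Suc t) * Suc t" by simp
    hence "p dvd ((M - 1) choose t) * (M - 1 - t)" by (simp only: choose_step)
    hence d1: "p dvd (M - 1 - t)" using IH p by (simp add: prime_dvd_mult_iff)
    have "2 * (M - 1 - t) + (2*t + 3) = p ^ s" using M Mt by simp
    moreover have "p dvd p ^ s" using s by (simp add: dvd_power)
    ultimately have "p dvd (2*t + 3)" using d1
      by (metis dvd_add_right_iff dvd_mult)
    moreover have "2*t + 3 < p" using Suc.prems by simp
    ultimately show False by (simp add: nat_dvd_not_less)
  qed
qed

lemma mult_avoid:
  fixes f g :: zpoly and p :: int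
  assumes "\<And>a b. \<not> p dvd lookup f a \<Longrightarrow> \<not> p dvd lookup g b \<Longrightarrow> a + b \<noteq> t"
  shows "p dvd lookup (f * g) t"
  unfolding lookup_mult_fin
proof (rule dvd_sum)
  fix l assume "l \<in> keys f"
  show "p dvd lookup f l * (\<Sum>q\<in>keys g. lookup g q when t = l + q)"
  proof (cases "p dvd lookup f l")
    case True then show ?thesis by simp
  next
    case False
    have "p dvd (\<Sum>q\<in>keys g. lookup g q when t = l + q)"
    proof (rule dvd_sum)
      fix q assume "q \<in> keys g"
      show "p dvd (lookup g q when t = l + q)"
        using assms[of l q] False by (cases "t = l + q") auto
    qed
    then show ?thesis by simp
  qed
qed

definition nu :: "nat \<Rightarrow> nat \<Rightarrow> nat \<Rightarrow> (nat \<Rightarrow>\<^sub>0 nat)" where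
  "nu Mv L R = (\<Sum>i\<in>{1..L}. single i Mv) + single (L+1) R"

lemma lookup_nu: "lookup (nu Mv L R) i = (if 1 \<le> i \<and> i \<le> L then Mv else if i = L+1 then R else 0)"
proof -
  have "(\<Sum>i'\<in>{1..L}. lookup (single i' Mv) i) = (\<Sum>i'\<in>{1..L}. if i = i' then Mv else 0)"
    by (rule sum.cong) (auto simp: lookup_single when_def)
  also have "\<dots> = (if 1 \<le> i \<and> i \<le> L then Mv else 0)"
    by (simp add: sum.delta)
  finally show ?thesis
    by (auto simp: nu_def lookup_add lookup_sum lookup_single when_def)
qed

lemma sum_nu:
  assumes "L + 1 \<le> n"
  shows "(\<Sum>i\<in>{1..n}. lookup (nu Mv L R) i) = L * Mv + R"
proof -
  have "(\<Sum>i\<in>{1..n}. lookup (nu Mv L R) i) = (\<Sum>i\<in>{1..n}. (if i \<in> {1..L} then Mv else 0) + (if i = L+1 then R else 0))"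
    by (rule sum.cong) (auto simp: lookup_nu)
  also have "\<dots> = (\<Sum>i\<in>{1..n}. if i \<in> {1..L} then Mv else 0) + (\<Sum>i\<in>{1..n}. if i = L+1 then R else 0)"
    by (rule sum.distrib)
  also have "(\<Sum>i\<in>{1..n}. if i \<in> {1..L} then Mv else 0) = (\<Sum>i\<in>{1..n} \<inter> {1..L}. Mv)"
    by (rule sym, rule sum.inter_restrict, simp)
  also have "{1..n} \<inter> {1..L} = {1..L}" using assms by auto
  also have "(\<Sum>i\<in>{1..n}. if i = L+1 then R else 0) = R"
    using assms by (simp add: sum.delta')
  finally show ?thesis by simp
qed

lemma lex_bound:
  fixes b :: "nat \<Rightarrow>\<^sub>0 nat"
  assumes keys: "\<And>i. lookup b i \<noteq> 0 \<Longrightarrow> 1 \<le> i \<and> i \<le> n"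
    and le: "\<And>i. lookup b i \<le> Mv"
    and Ln: "L + 1 \<le> n"
    and sm: "(\<Sum>i\<in>{1..n}. lookup b i) = L * Mv + R"
  shows "b \<le> nu Mv L R"
proof (rule ccontr)
  assume "\<not> b \<le> nu Mv L R"
  hence "nu Mv L R < b" by simp
  then obtain k where k1: "lookup (nu Mv L R) k < lookup b k"
    and k2: "\<And>k'. k' < k \<Longrightarrow> lookup (nu Mv L R) k' = lookup b k'"
    unfolding less_pm_iff less_fun_def by blast
  have kn: "1 \<le> k \<and> k \<le> n" using keys k1 by (metis not_less0)
  have kL: "\<not> k \<le> L" using k1 le[of k] kn by (auto simp: lookup_nu)
  have bi: "\<And>i. i \<in> {1..L} \<Longrightarrow> lookup b i = Mv"
  proof -
    fix i assume "i \<in> {1..L}"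
    then have "i < k" using kL by auto
    then show "lookup b i = Mv" using k2[of i] \<open>i \<in> {1..L}\<close> by (auto simp: lookup_nu)
  qed
  have s1: "(\<Sum>i\<in>{1..L}. lookup b i) = L * Mv" using bi by simp
  have s2: "(\<Sum>i\<in>{1..L+1}. lookup b i) = L * Mv + lookup b (L+1)"
    using s1 by (simp add: add.commute)
  show False
  proof (cases "k = L + 1")
    case True
    have "lookup b (L+1) > R" using k1 True by (simp add: lookup_nu)
    moreover have "(\<Sum>i\<in>{1..L+1}. lookup b i) \<le> (\<Sum>i\<in>{1..n}. lookup b i)"
      using Ln by (intro sum_mono2) auto
    ultimately show False using s2 sm by simp
  next
    case False
    hence kgt: "k > L + 1" using kL by simp
    have bl: "lookup b (L+1) = R" using k2[of "L+1"] kgt by (simp add: lookup_nu)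
    have bk: "lookup b k > 0" using k1 by simp
    have "(\<Sum>i\<in>insert k {1..L+1}. lookup b i) \<le> (\<Sum>i\<in>{1..n}. lookup b i)"
      using Ln kn by (intro sum_mono2) auto
    moreover have "(\<Sum>i\<in>insert k {1..L+1}. lookup b i) = lookup b k + (L * Mv + R)"
      using kgt s2 bl by simp
    ultimately show False using sm bk by simp
  qed
qed



lemma Icomp_CF:
  assumes j: "j \<in> {1..n}"
  shows "lookup (Icomp n p s l j) b = CF {1..n} (\<lambda>i. if i = j then M p s - 1 else M p s) (l*p^s - 1) b"
proof -
  let ?e = "\<lambda>i. if i = j then M p s - 1 else M p s"
  have "(\<Prod>i\<in>{1..n}. [:- zvar i, 1:] ^ ?e i) = [:- zvar j, 1:] ^ ?e j * (\<Prod>i\<in>{1..n} - {j}. [:- zvar i, 1:] ^ ?e i)"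
    by (rule prod.remove[OF _ j]) simp
  also have "(\<Prod>i\<in>{1..n} - {j}. [:- zvar i, 1:] ^ ?e i) = (\<Prod>i\<in>{1..n} - {j}. [:- zvar i, 1:] ^ M p s)"
    by (rule prod.cong) auto
  finally have "Phi_quot n p s j = (\<Prod>i\<in>{1..n}. [:- zvar i, 1:] ^ ?e i)"
    by (simp add: Phi_quot_def)
  then show ?thesis by (simp add: Icomp_def Pcomp_def coeff_prod_formula)
qed

lemma sum_e:
  assumes j: "j \<in> {1..n}"
  shows "(\<Sum>i\<in>{1..n}. if i = j then Mv - 1 else Mv) = (Mv - 1) + (n - 1) * (Mv::nat)"
proof -
  have "(\<Sum>i\<in>{1..n}. if i = j then Mv - 1 else Mv) = (Mv - 1) + (\<Sum>i\<in>{1..n} - {j}. if i = j then Mv - 1 else Mv)"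
    using sum.remove[OF _ j, of "\<lambda>i. if i = j then Mv - 1 else Mv"] by simp
  also have "(\<Sum>i\<in>{1..n} - {j}. if i = j then Mv - 1 else Mv) = (\<Sum>i\<in>{1..n} - {j}. Mv)"
    by (rule sum.cong) auto
  also have "\<dots> = (n - 1) * Mv" using j by simp
  finally show ?thesis .
qed

lemma arith1:
  fixes Mv P l g X :: nat
  assumes "2*Mv + 1 = P" "1 \<le> l" "l \<le> g" "g + 1 \<le> Mv"
  shows "(l*P - 1 + X = (Mv - 1) + (2*g+1 - 1)*Mv) \<longleftrightarrow> X = 2*(g-l)*Mv + (Mv - l)"
proof -
  obtain d where d: "g = l + d" using assms(3) le_Suc_ex by blast
  have e1: "l*P = 2*(l*Mv) + l" by (subst assms(1)[symmetric]) (simp add: algebra_simps)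
  have e2: "(2*g+1 - 1)*Mv = 2*(l*Mv) + 2*(d*Mv)" using d by (simp add: algebra_simps)
  have e3: "2*(g-l)*Mv = 2*(d*Mv)" using d by simp
  show ?thesis unfolding e1 e2 e3 using assms d by linarith
qed

lemma basic_facts:
  assumes p: "prime p" "odd p" and gp: "p > 2*g+1" and s: "s \<ge> 1"
  shows "2 * M p s + 1 = p ^ s" and "g + 1 \<le> M p s"
proof -
  have "odd (p ^ s)" using p by simp
  then obtain k where k: "p ^ s = 2*k + 1" by (metis oddE)
  then show e: "2 * M p s + 1 = p ^ s" unfolding M_def by simp
  have "p \<le> p ^ s" using power_increasing[of 1 s p] s prime_gt_0_nat[OF p(1)] by simp
  moreover have "p \<noteq> 2*g + 2" using p(2) by auto
  ultimately have "2 * M p s + 1 \<ge> 2*g+3" using e gp by linarith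
  then show "g + 1 \<le> M p s" by linarith
qed



lemma vbound:
  assumes p: "prime p" "odd p" and gp: "p > 2*g+1" and s: "s \<ge> 1"
    and l: "1 \<le> l" "l \<le> g" and j: "j \<in> {1..2*g+1}"
    and nz: "lookup (Icomp (2*g+1) p s l j) b \<noteq> 0"
  shows "b \<le> nu (M p s) (2*(g-l)) (M p s - l)"
    and "j \<le> 2*(g-l) \<Longrightarrow> b \<noteq> nu (M p s) (2*(g-l)) (M p s - l)"
proof -
  let ?Mv = "M p s"
  let ?e = "\<lambda>i. if i = j then ?Mv - 1 else ?Mv"
  note bf = basic_facts[OF p gp s]
  have "CF {1..2*g+1} ?e (l*p^s - 1) b \<noteq> 0" using nz Icomp_CF[OF j] by simp
  then have c1: "\<forall>i. i \<notin> {1..2*g+1} \<longrightarrow> lookup b i = 0"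
    and c2: "\<forall>i\<in>{1..2*g+1}. lookup b i \<le> ?e i"
    and c3: "l*p^s - 1 + (\<Sum>i\<in>{1..2*g+1}. lookup b i) = (\<Sum>i\<in>{1..2*g+1}. ?e i)"
    unfolding CF_def by (auto split: if_splits)
  have c3': "l*p^s - 1 + (\<Sum>i\<in>{1..2*g+1}. lookup b i) = (?Mv - 1) + (2*g+1 - 1) * ?Mv"
    using c3 sum_e[OF j] by simp
  have sm: "(\<Sum>i\<in>{1..2*g+1}. lookup b i) = 2*(g-l)*?Mv + (?Mv - l)"
    using arith1[OF bf(1) l bf(2)] c3' by simp
  show "b \<le> nu ?Mv (2*(g-l)) (?Mv - l)"
  proof (rule lex_bound[where n = "2*g+1"])
    fix i
    show "lookup b i \<noteq> 0 \<Longrightarrow> 1 \<le> i \<and> i \<le> 2*g+1" using c1 by auto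
    show "lookup b i \<le> ?Mv"
    proof (cases "i \<in> {1..2*g+1}")
      case True
      then have "lookup b i \<le> ?e i" using c2 by blast
      moreover have "?e i \<le> ?Mv" by simp
      ultimately show ?thesis by linarith
    next
      case False
      then show ?thesis using c1 by simp
    qed
  next
    show "2*(g-l) + 1 \<le> 2*g+1" by simp
    show "(\<Sum>i\<in>{1..2*g+1}. lookup b i) = 2*(g-l) * ?Mv + (?Mv - l)" by (rule sm)
  qed
  assume jl: "j \<le> 2*(g-l)"
  have "lookup b j \<le> ?e j" using c2 j by blast
  then have "lookup b j \<le> ?Mv - 1" by simp
  moreover have "lookup (nu ?Mv (2*(g-l)) (?Mv - l)) j = ?Mv" using jl j by (simp add: lookup_nu)
  moreover have "?Mv \<ge> 1" using bf(2) by simp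
  ultimately show "b \<noteq> nu ?Mv (2*(g-l)) (?Mv - l)" by auto
qed

lemma unit_factor_ndvd:
  fixes q y :: int
  assumes "\<not> q dvd y"
  shows "\<not> q dvd (-1) ^ x * y"
proof
  assume "q dvd (-1) ^ x * y"
  then have "q dvd (-1) ^ x * ((-1) ^ x * y)" by (rule dvd_mult)
  moreover have "(-1::int) ^ x * ((-1) ^ x * y) = y"
    by (simp add: mult.assoc[symmetric] power_mult_distrib[symmetric])
  ultimately show False using assms by simp
qed

lemma vdiag:
  assumes p: "prime p" "odd p" and gp: "p > 2*g+1" and s: "s \<ge> 1"
    and k: "1 \<le> k" "k \<le> g"
  shows "\<not> int p dvd lookup (Icomp (2*g+1) p s k (2*(g-k)+1)) (nu (M p s) (2*(g-k)) (M p s - k))"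
proof -
  let ?Mv = "M p s"
  let ?j = "2*(g-k)+1"
  let ?L = "2*(g-k)"
  let ?e = "\<lambda>i. if i = ?j then ?Mv - 1 else ?Mv"
  let ?nu = "nu ?Mv ?L (?Mv - k)"
  note bf = basic_facts[OF p gp s]
  have j: "?j \<in> {1..2*g+1}" by auto
  have ln: "lookup ?nu i = (if 1 \<le> i \<and> i \<le> ?L then ?Mv else if i = ?L+1 then ?Mv - k else 0)" for i
    by (rule lookup_nu)
  have d1: "\<forall>i. i \<notin> {1..2*g+1} \<longrightarrow> lookup ?nu i = 0" by (auto simp: ln)
  have d2: "\<forall>i\<in>{1..2*g+1}. lookup ?nu i \<le> ?e i" using k by (auto simp: ln)
  have snu: "(\<Sum>i\<in>{1..2*g+1}. lookup ?nu i) = ?L * ?Mv + (?Mv - k)"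
    by (rule sum_nu) simp
  have d3: "k*p^s - 1 + (\<Sum>i\<in>{1..2*g+1}. lookup ?nu i) = (\<Sum>i\<in>{1..2*g+1}. ?e i)"
    using arith1[OF bf(1) k bf(2)] snu sum_e[OF j] by simp
  have val: "lookup (Icomp (2*g+1) p s k ?j) ?nu
      = (\<Prod>i\<in>{1..2*g+1}. (-1) ^ (lookup ?nu i) * int (?e i choose lookup ?nu i))"
    using Icomp_CF[OF j] d1 d2 d3 unfolding CF_def by simp
  have pi: "prime (int p)" using p by simp
  have nd: "\<not> int p dvd (-1) ^ (lookup ?nu i) * int (?e i choose lookup ?nu i)" if i: "i \<in> {1..2*g+1}" for i
  proof (rule unit_factor_ndvd)
    show "\<not> int p dvd int (?e i choose lookup ?nu i)"
    proof (cases "i = ?j")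
      case True
      have "?e i choose lookup ?nu i = (?Mv - 1) choose (?Mv - k)" using True by (simp add: ln)
      also have "\<dots> = (?Mv - 1) choose (k - 1)"
      proof -
        have "?Mv - k \<le> ?Mv - 1" using k by simp
        then have "(?Mv - 1) choose (?Mv - k) = (?Mv - 1) choose (?Mv - 1 - (?Mv - k))"
          by (rule binomial_symmetric)
        moreover have "?Mv - 1 - (?Mv - k) = k - 1" using k bf(2) by simp
        ultimately show ?thesis by simp
      qed
      finally have eq: "?e i choose lookup ?nu i = (?Mv - 1) choose (k - 1)" .
      have "\<not> p dvd ((?Mv - 1) choose (k - 1))"
        by (rule binom_ndvd[OF p(1) bf(1) s]) (use k gp in simp)
      then show ?thesis using eq by simp
    next
      case False
      then have "?e i choose lookup ?nu i = 1" using i by (auto simp: ln)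
      moreover have "p > 1" using prime_gt_1_nat[OF p(1)] .
      ultimately show ?thesis by simp
    qed
  qed
  have "\<not> int p dvd (\<Prod>i\<in>{1..2*g+1}. (-1) ^ (lookup ?nu i) * int (?e i choose lookup ?nu i))"
    by (subst prime_dvd_prod_iff[OF finite_atLeastAtMost pi]) (use nd in blast)
  then show ?thesis using val by simp
qed



theorem lemma8p1:
  fixes p g s :: nat and c :: "nat \<Rightarrow> zpoly"
  assumes "prime p" and "odd p" and "g \<ge> 1" and "p > 2 * g + 1" and "s \<ge> 1"
    and "\<forall>l\<in>{1..g}. in_Zz (2*g+1) (c l)"
    and "\<forall>j\<in>{1..2*g+1}. in_pZ p (\<Sum>l=1..g. c l * Icomp (2*g+1) p s l j)"
  shows "\<forall>l\<in>{1..g}. in_pZ p (c l)"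
proof (rule ccontr)
  assume "\<not> (\<forall>l\<in>{1..g}. in_pZ p (c l))"
  then obtain l0 where l0: "l0 \<in> {1..g}" "\<not> in_pZ p (c l0)" by blast
  note p = assms(1,2) and gp = assms(4) and s = assms(5)
  have pi: "prime (int p)" using p by simp
  define A where "A = {l\<in>{1..g}. \<not> in_pZ p (c l)}"
  have finA: "finite A" and neA: "A \<noteq> {}" using l0 by (auto simp: A_def)
  define S where "S l = {m. \<not> int p dvd lookup (c l) m}" for l
  have finS: "finite (S l)" for l
  proof (rule finite_subset[of _ "keys (c l)"])
    show "S l \<subseteq> keys (c l)" by (auto simp: S_def in_keys_iff)
  qed simp
  have neS: "l \<in> A \<Longrightarrow> S l \<noteq> {}" for l by (auto simp: A_def S_def in_pZ_def)
  define \<mu> where "\<mu> l = Max (S l)" for l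
  have mu1: "l \<in> A \<Longrightarrow> \<not> int p dvd lookup (c l) (\<mu> l)" for l
    using Max_in[OF finS neS] unfolding \<mu>_def S_def by blast
  have mu2: "l \<in> A \<Longrightarrow> \<not> int p dvd lookup (c l) a \<Longrightarrow> a \<le> \<mu> l" for l a
    using Max_ge[OF finS] unfolding \<mu>_def S_def by blast
  define \<nu> where "\<nu> l = nu (M p s) (2*(g-l)) (M p s - l)" for l
  define W where "W = Max ((\<lambda>l. \<mu> l + \<nu> l) ` A)"
  have Wge: "l \<in> A \<Longrightarrow> \<mu> l + \<nu> l \<le> W" for l unfolding W_def using finA by simp
  have "W \<in> (\<lambda>l. \<mu> l + \<nu> l) ` A" unfolding W_def using finA neA by (intro Max_in) auto
  then have neK: "{l\<in>A. \<mu> l + \<nu> l = W} \<noteq> {}" by auto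
  define k where "k = Max {l\<in>A. \<mu> l + \<nu> l = W}"
  have "k \<in> {l\<in>A. \<mu> l + \<nu> l = W}" unfolding k_def using finA neK by (intro Max_in) auto
  then have kA: "k \<in> A" and kW: "\<mu> k + \<nu> k = W" by auto
  have kmax: "l \<in> A \<Longrightarrow> \<mu> l + \<nu> l = W \<Longrightarrow> l \<le> k" for l
    unfolding k_def using finA by (intro Max_ge) auto
  have k1: "1 \<le> k" "k \<le> g" using kA by (auto simp: A_def)
  define j where "j = 2*(g-k) + 1"
  have j: "j \<in> {1..2*g+1}" unfolding j_def by auto
  define X where "X l = lookup (c l * Icomp (2*g+1) p s l j) W" for l
  have "int p dvd lookup (\<Sum>l=1..g. c l * Icomp (2*g+1) p s l j) W"
    using assms(7) j unfolding in_pZ_def by blast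
  then have hs: "int p dvd (\<Sum>l\<in>{1..g}. X l)" by (simp add: lookup_sum X_def)
  have kin: "k \<in> {1..g}" using k1 by auto
  have rest: "int p dvd (\<Sum>l\<in>{1..g} - {k}. X l)"
  proof (rule dvd_sum)
    fix l assume l: "l \<in> {1..g} - {k}"
    show "int p dvd X l"
    proof (cases "l \<in> A")
      case False
      then have "\<forall>a. int p dvd lookup (c l) a" using l by (auto simp: A_def in_pZ_def)
      then show ?thesis unfolding X_def by (intro mult_zero_mod) auto
    next
      case True
      have l1: "1 \<le> l" "l \<le> g" using l by auto
      show ?thesis unfolding X_def
      proof (rule mult_avoid)
        fix a b
        assume a: "\<not> int p dvd lookup (c l) a" and b: "\<not> int p dvd lookup (Icomp (2*g+1) p s l j) b"
        have aa: "a \<le> \<mu> l" using mu2[OF True a] .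
        have bnz: "lookup (Icomp (2*g+1) p s l j) b \<noteq> 0" using b by auto
        have bb: "b \<le> \<nu> l" unfolding \<nu>_def by (rule vbound(1)[OF p gp s l1 j bnz])
        show "a + b \<noteq> W"
        proof (cases "l < k")
          case True
          then have "j \<le> 2*(g-l)" unfolding j_def using k1 by simp
          then have "b \<noteq> \<nu> l" unfolding \<nu>_def by (rule vbound(2)[OF p gp s l1 j bnz])
          then have "b < \<nu> l" using bb by simp
          then have "a + b < \<mu> l + \<nu> l" using aa by (simp add: add_le_less_mono)
          then show ?thesis using Wge[OF \<open>l \<in> A\<close>] by simp
        next
          case False
          then have "l > k" using l by auto
          then have "\<mu> l + \<nu> l \<noteq> W" using kmax[OF \<open>l \<in> A\<close>] by force
          then have "\<mu> l + \<nu> l < W" using Wge[OF \<open>l \<in> A\<close>] by simp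
          moreover have "a + b \<le> \<mu> l + \<nu> l" using aa bb by (simp add: add_mono)
          ultimately show ?thesis by simp
        qed
      qed
    qed
  qed
  have top: "int p dvd X k - lookup (c k) (\<mu> k) * lookup (Icomp (2*g+1) p s k j) (\<nu> k)"
    unfolding X_def kW[symmetric]
  proof (rule mult_top)
    fix a assume "\<not> int p dvd lookup (c k) a" then show "a \<le> \<mu> k" by (rule mu2[OF kA])
  next
    fix b assume "\<not> int p dvd lookup (Icomp (2*g+1) p s k j) b"
    then have bnz: "lookup (Icomp (2*g+1) p s k j) b \<noteq> 0" by auto
    show "b \<le> \<nu> k" unfolding \<nu>_def by (rule vbound(1)[OF p gp s k1 j bnz])
  qed
  have nd1: "\<not> int p dvd lookup (c k) (\<mu> k)" by (rule mu1[OF kA])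
  have nd2: "\<not> int p dvd lookup (Icomp (2*g+1) p s k j) (\<nu> k)"
    unfolding j_def \<nu>_def by (rule vdiag[OF p gp s k1])
  have "\<not> int p dvd lookup (c k) (\<mu> k) * lookup (Icomp (2*g+1) p s k j) (\<nu> k)"
    using nd1 nd2 pi by (simp add: prime_dvd_mult_iff)
  then have ndX: "\<not> int p dvd X k" using top by (metis dvd_diff_commute dvd_diff dvd_add_right_iff diff_add_cancel)
  have "(\<Sum>l\<in>{1..g}. X l) = X k + (\<Sum>l\<in>{1..g} - {k}. X l)"
    by (rule sum.remove[OF _ kin]) simp
  then show False using hs rest ndX by (simp add: dvd_add_left_iff)
qed


end
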